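(* Let $X$ be a set, $n\geq 1$ a natural number, and $K$ a compact subspace of the product $\mathbb{R}^X$ (product topology). Then $K$ is premetric of degree at most $n$ if and only if there exists a countable set $D_0\subseteq X$ such that the restriction map $\pi_{D_0}:K\to\{f\restriction_{D_0}: f\in K\}$, $f\mapsto f\restriction_{D_0}$, is at most $n$-to-$1$ (i.e. every point of the image has at most $n$ preimages).
   Context: A compact space $K$ is premetric of degree at most $n$ if there is a continuous surjection $f:K\to M$ onto a metrizable compact space $M$ with $|f^{-1}(x)|\leq n$ for all $x\in M$. *)

theory Defs
  imports "HOL-Analysis.Analysis"
begin

text \<open>The target space M is taken on the same carrier type as T; this loses no
generality, since any surjective image of T has cardinality at most that of T and can
hence be transported (homeomorphically) into the type of points of T.\<close>

definition premetric_deg :: "'x topology \<Rightarrow> nat \<Rightarrow> bool" where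
  "premetric_deg T n \<longleftrightarrow>
     compact_space T \<and>
     (\<exists>(M::'x topology) f.
        continuous_map T M f \<and> f ` topspace T = topspace M \<and>
        metrizable_space M \<and> compact_space M \<and>
        (\<forall>y\<in>topspace M. finite {x\<in>topspace T. f x = y} \<and>
                          card {x\<in>topspace T. f x = y} \<le> n))"

end

theory Submission imports Defs begin
lemma sep_finite:
  fixes X :: "'a set" and C :: "(('a \<Rightarrow> real) \<times> ('a \<Rightarrow> real)) set"
  defines "P \<equiv> product_topology (\<lambda>_. euclideanreal) X"
  assumes C: "compactin (prod_topology P P) C" and dist: "\<And>a b. (a,b) \<in> C \<Longrightarrow> a \<noteq> b"
  shows "\<exists>F. finite F \<and> F \<subseteq> X \<and> (\<forall>p\<in>C. \<exists>i\<in>F. fst p i \<noteq> snd p i)"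
proof (rule ccontr)
  assume neg: "\<not> ?thesis"
  define Z where "Z i = {p \<in> topspace (prod_topology P P). fst p i = snd p i}" for i
  have clo: "closedin (prod_topology P P) (Z i)" if "i \<in> X" for i
  proof -
    have pr: "continuous_map P euclideanreal (\<lambda>x. x i)"
      unfolding P_def using continuous_map_product_projection[OF that, of "\<lambda>_. euclideanreal"] by simp
    have c1: "continuous_map (prod_topology P P) euclideanreal (\<lambda>p. fst p i)"
      using continuous_map_compose[OF continuous_map_fst pr] by (simp add: o_def)
    have c2: "continuous_map (prod_topology P P) euclideanreal (\<lambda>p. snd p i)"
      using continuous_map_compose[OF continuous_map_snd pr] by (simp add: o_def)
    show ?thesis unfolding Z_def
      by (rule closedin_continuous_maps_eq[OF _ c1 c2]) simp
  qed
  have fip: "\<forall>\<U>. (\<forall>A\<in>\<U>. closedin (prod_topology P P) A) \<and> (\<forall>G. finite G \<and> G \<subseteq> \<U> \<longrightarrow> C \<inter> \<Inter>G \<noteq> {}) \<longrightarrow> C \<inter> \<Inter>\<U> \<noteq> {}"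
    using C[unfolded compactin_fip] by (rule conjunct2)
  have CT: "C \<subseteq> topspace (prod_topology P P)"
    using C by (rule compactin_subset_topspace)
  have fin: "C \<inter> \<Inter> G \<noteq> {}" if G: "finite G \<and> G \<subseteq> Z ` X" for G
  proof -
    obtain F where F: "F \<subseteq> X" "finite F" "G = Z ` F"
      using G by (meson finite_subset_image)
    have "\<not> (\<forall>p\<in>C. \<exists>i\<in>F. fst p i \<noteq> snd p i)" using neg F by blast
    then obtain p where p: "p \<in> C" "\<forall>i\<in>F. fst p i = snd p i" by blast
    have "p \<in> \<Inter> G" unfolding F(3) Z_def using p CT by blast
    then show ?thesis using p by blast
  qed
  have "C \<inter> \<Inter>(Z ` X) \<noteq> {}"
    apply (rule fip[rule_format, of "Z ` X"])
    apply (rule conjI)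
    using clo apply blast
    using fin apply blast
    done
  then obtain p where p: "p \<in> C" "\<forall>i\<in>X. fst p i = snd p i"
    unfolding Z_def by blast
  have "fst p \<in> extensional X" "snd p \<in> extensional X" 
    using CT p(1) unfolding P_def by (auto simp: PiE_iff)
  then have "fst p = snd p" using p(2) by (meson extensionalityI)
  then show False using dist p by (metis prod.collapse)
qed

theorem mainTheorem2:
  fixes X :: "'a set" and n :: nat and K :: "('a \<Rightarrow> real) set"
  assumes "n \<ge> 1"
    and "compactin (product_topology (\<lambda>_. euclideanreal) X) K"
  shows "premetric_deg (subtopology (product_topology (\<lambda>_. euclideanreal) X) K) n \<longleftrightarrow>
         (\<exists>D0. D0 \<subseteq> X \<and> countable D0 \<and>
            (\<forall>g\<in>(\<lambda>f. restrict f D0) ` K.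
               finite {f\<in>K. restrict f D0 = g} \<and> card {f\<in>K. restrict f D0 = g} \<le> n))"
proof -
  define P where "P = product_topology (\<lambda>_. euclideanreal) X"
  define T where "T = subtopology P K"
  have KP: "K \<subseteq> topspace P" using assms(2) unfolding P_def by (rule compactin_subset_topspace)
  have topT: "topspace T = K" unfolding T_def using KP by auto
  have cT: "compact_space T" unfolding T_def P_def using assms(2) by (rule compact_space_subtopology)
  show ?thesis
  proof
    assume "premetric_deg (subtopology (product_topology (\<lambda>_. euclideanreal) X) K) n"
    then obtain M :: "('a \<Rightarrow> real) topology" and f where
      f: "continuous_map T M f" and met: "metrizable_space M"
      and fib: "\<forall>y\<in>topspace M. finite {x\<in>topspace T. f x = y} \<and> card {x\<in>topspace T. f x = y} \<le> n"
      unfolding premetric_deg_def T_def P_def by blast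
    obtain Mm d where Md: "Metric_space Mm d" and MM: "M = Metric_space.mtopology Mm d"
      using met unfolding metrizable_space_def by blast
    have fM: "\<And>x. x \<in> K \<Longrightarrow> f x \<in> topspace M"
      using continuous_map_image_subset_topspace[OF f] topT by blast
    have topM: "topspace M = Mm" unfolding MM by (rule Metric_space.topspace_mtopology[OF Md])
    define m where "m = metric (Mm, d)"
    have mtop: "mtopology_of m = M" unfolding m_def MM using Metric_space.mtopology_of[OF Md] .
    have mdist: "mdist m = d" unfolding m_def using Metric_space.mdist_metric[OF Md] .
    have cd: "continuous_map (prod_topology T T) euclideanreal (\<lambda>p. d (f (fst p)) (f (snd p)))"
    proof -
      have "continuous_map (prod_topology T T) (mtopology_of m) (f \<circ> fst)"
        unfolding mtop by (rule continuous_map_compose[OF continuous_map_fst f])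
      moreover have "continuous_map (prod_topology T T) (mtopology_of m) (f \<circ> snd)"
        unfolding mtop by (rule continuous_map_compose[OF continuous_map_snd f])
      ultimately show ?thesis using continuous_map_mdist[of "prod_topology T T" m "f \<circ> fst" "f \<circ> snd"]
        by (simp add: mdist o_def)
    qed
    define C where "C k = {p \<in> topspace (prod_topology T T). 1 / real (Suc k) \<le> d (f (fst p)) (f (snd p))}" for k
    have Ck: "\<exists>F. finite F \<and> F \<subseteq> X \<and> (\<forall>p\<in>C k. \<exists>i\<in>F. fst p i \<noteq> snd p i)" for k
    proof (rule sep_finite)
      have "closedin (prod_topology T T) (C k)" unfolding C_def
        using closedin_continuous_map_preimage[OF cd, of "{1 / real (Suc k)..}"] by simp
      then have "compactin (prod_topology T T) (C k)"
        by (rule closedin_compact_space[rotated]) (simp add: cT compact_space_prod_topology)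
      then show "compactin (prod_topology (product_topology (\<lambda>_. euclideanreal) X) (product_topology (\<lambda>_. euclideanreal) X)) (C k)"
        unfolding T_def P_def subtopology_Times[symmetric] compactin_subtopology by blast
      show "a \<noteq> b" if "(a, b) \<in> C k" for a b
      proof
        assume "a = b"
        have "a \<in> topspace T" using that unfolding C_def by auto
        then have "f a \<in> Mm" using fM topM topT by blast
        then have "d (f a) (f a) = 0" using Md by (simp add: Metric_space.zero)
        moreover have "1 / real (Suc k) \<le> d (f a) (f b)" using that unfolding C_def by auto
        ultimately show False using \<open>a = b\<close> by simp
      qed
    qed
    then have "\<exists>F. \<forall>k. finite (F k) \<and> F k \<subseteq> X \<and> (\<forall>p\<in>C k. \<exists>i\<in>F k. fst p i \<noteq> snd p i)"
      by (intro choice allI)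
    then obtain F where F: "\<And>k. finite (F k) \<and> F k \<subseteq> X \<and> (\<forall>p\<in>C k. \<exists>i\<in>F k. fst p i \<noteq> snd p i)"
      by blast
    define D0 where "D0 = (\<Union>k. F k)"
    show "\<exists>D0. D0 \<subseteq> X \<and> countable D0 \<and>
            (\<forall>g\<in>(\<lambda>f. restrict f D0) ` K.
               finite {f\<in>K. restrict f D0 = g} \<and> card {f\<in>K. restrict f D0 = g} \<le> n)"
    proof (intro exI conjI ballI)
      show "D0 \<subseteq> X" unfolding D0_def using F by blast
      show "countable D0" unfolding D0_def using F by (simp add: countable_finite)
      fix g assume "g \<in> (\<lambda>f. restrict f D0) ` K"
      then obtain x0 where x0: "x0 \<in> K" "g = restrict x0 D0" by blast
      have sub: "{f\<in>K. restrict f D0 = g} \<subseteq> {x\<in>topspace T. f x = f x0}"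
      proof
        fix x assume x: "x \<in> {f\<in>K. restrict f D0 = g}"
        then have xK: "x \<in> K" and agree: "\<forall>i\<in>D0. x i = x0 i"
          using x0 by (auto simp: restrict_def fun_eq_iff split: if_splits) 
        have "f x = f x0"
        proof (rule ccontr)
          assume ne: "f x \<noteq> f x0"
          have "f x \<in> Mm" "f x0 \<in> Mm" using fM topM xK x0(1) by blast+
          then have "d (f x) (f x0) > 0" using ne Md by (simp add: Metric_space.mdist_pos_eq)
          then obtain k where "inverse (real (Suc k)) < d (f x) (f x0)"
            using reals_Archimedean by blast
          then have "(x, x0) \<in> C k" unfolding C_def using xK x0(1) topT
            by (auto simp: divide_inverse)
          then have "\<exists>i\<in>F k. fst (x,x0) i \<noteq> snd (x,x0) i" using F by blast
          then obtain i where "i \<in> F k" "x i \<noteq> x0 i" by auto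
          then show False using agree D0_def by blast
        qed
        then show "x \<in> {x\<in>topspace T. f x = f x0}" using xK topT by auto
      qed
      have fx0: "f x0 \<in> topspace M" using fM x0(1) by blast
      show "finite {f\<in>K. restrict f D0 = g}" using fib fx0 sub finite_subset by blast
      have "card {f\<in>K. restrict f D0 = g} \<le> card {x\<in>topspace T. f x = f x0}"
        using fib fx0 sub by (intro card_mono) auto
      then show "card {f\<in>K. restrict f D0 = g} \<le> n" using fib fx0 by (meson le_trans)
    qed
  next
    assume "\<exists>D0. D0 \<subseteq> X \<and> countable D0 \<and>
            (\<forall>g\<in>(\<lambda>f. restrict f D0) ` K.
               finite {f\<in>K. restrict f D0 = g} \<and> card {f\<in>K. restrict f D0 = g} \<le> n)"
    then obtain D0 where D0: "D0 \<subseteq> X" "countable D0"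
      and fb: "\<forall>g\<in>(\<lambda>f. restrict f D0) ` K.
               finite {f\<in>K. restrict f D0 = g} \<and> card {f\<in>K. restrict f D0 = g} \<le> n" by blast
    define Q where "Q = product_topology (\<lambda>_. euclideanreal) D0"
    define M where "M = subtopology Q ((\<lambda>f. restrict f D0) ` K)"
    have cQ: "continuous_map T Q (\<lambda>f. restrict f D0)"
      unfolding Q_def
    proof (rule continuous_map_componentwise[THEN iffD2], intro conjI ballI)
      show "(\<lambda>f. restrict f D0) ` topspace T \<subseteq> extensional D0" by auto
      fix k assume k: "k \<in> D0"
      have "continuous_map P euclideanreal (\<lambda>x. x k)"
        unfolding P_def using continuous_map_product_projection[of k X "\<lambda>_. euclideanreal"] k D0(1) by auto
      then have "continuous_map T euclideanreal (\<lambda>x. x k)"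
        unfolding T_def by (rule continuous_map_from_subtopology)
      then show "continuous_map T euclideanreal (\<lambda>x. restrict x D0 k)"
        using k by simp
    qed
    have imgQ: "(\<lambda>f. restrict f D0) ` K \<subseteq> topspace Q" unfolding Q_def by auto
    have topM: "topspace M = (\<lambda>f. restrict f D0) ` K" unfolding M_def using imgQ by auto
    show "premetric_deg (subtopology (product_topology (\<lambda>_. euclideanreal) X) K) n"
      unfolding premetric_deg_def
    proof (intro conjI exI)
      show "compact_space (subtopology (product_topology (\<lambda>_. euclideanreal) X) K)"
        using cT unfolding T_def P_def .
      show "continuous_map (subtopology (product_topology (\<lambda>_. euclideanreal) X) K) M (\<lambda>f. restrict f D0)"
        unfolding M_def using cQ topT unfolding T_def P_def
        by (simp add: continuous_map_in_subtopology)
      show "(\<lambda>f. restrict f D0) ` topspace (subtopology (product_topology (\<lambda>_. euclideanreal) X) K) = topspace M"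
        using topT topM unfolding T_def P_def by simp
      show "metrizable_space M" unfolding M_def Q_def
        by (intro metrizable_space_subtopology)
           (simp add: metrizable_space_product_topology metrizable_space_euclidean countable_subset[OF _ D0(2)])
      have "compactin Q ((\<lambda>f. restrict f D0) ` K)"
        using image_compactin[OF cT[unfolded compact_space_def] cQ] topT by simp
      then show "compact_space M" unfolding M_def by (rule compact_space_subtopology)
      show "\<forall>y\<in>topspace M.
         finite {x \<in> topspace (subtopology (product_topology (\<lambda>_. euclideanreal) X) K). restrict x D0 = y} \<and>
         card {x \<in> topspace (subtopology (product_topology (\<lambda>_. euclideanreal) X) K). restrict x D0 = y} \<le> n"
        using fb topM topT unfolding T_def P_def by simp
    qed
  qed
qed

end
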